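(* Let $x$ be a Bertrand D-curve and $x_1$ a Bertrand partner D-curve of $x$. Then: (i) if $x$ is a geodesic curve, the geodesic curvature of $x_1$ is $k_{g_1} = \lambda\tau_g^2(\cos\theta - \lambda\tau_g\sin\theta)\left(\dfrac{ds}{ds_1}\right)^3$; (ii) if $x$ is a principal line, then $k_{g_1} = k_g(1+\lambda k_g)^2\cos\theta\left(\dfrac{ds}{ds_1}\right)^3$.
   Context: For a unit-speed curve $x(s)$ on an oriented surface $S\subset\mathbb{E}^3$, the Darboux frame is $\{T,g,n\}$ ($T$ unit tangent, $n$ unit surface normal along the curve, $g=n\times T$), with $\dot T = k_g g + k_n n$, $\dot g = -k_g T + \tau_g n$, $\dot n = -k_n T - \tau_g g$; $k_g,k_n,\tau_g$ are the geodesic curvature, normal curvature and geodesic torsion. For $x_1(s_1)$ on an oriented surface $S_1$ the analogous objects carry subscript $1$. $x$ is a Bertrand D-curve with Bertrand partner D-curve $x_1$ if there is a correspondence of points such that at corresponding points $g$ coincides with $g_1$; then $x(s)=x_1(s_1)+\lambda g_1(s_1)$ with $\lambda$ a nonzero constant, and $s$ is a function of $s_1$. $\theta$ is the angle between $T$ and $T_1$, oriented so that $T_1=\cos\theta\,T+\sin\theta\,n$, $n_1=-\sin\theta\,T+\cos\theta\,n$. Geodesic means $k_g=0$; principal line means $\tau_g=0$. *)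

theory Defs
  imports "HOL-Analysis.Analysis"
begin

text \<open>Darboux frame data along a unit-speed curve x(s), s in an open parameter
set I, lying on an oriented surface: T unit tangent, n unit surface normal
along the curve, g = n x T, with the Darboux frame equations
T' = kg g + kn n,  g' = -kg T + tg n,  n' = -kn T - tg g.\<close>

definition darboux_curve ::
  "real set \<Rightarrow> (real \<Rightarrow> real^3) \<Rightarrow> (real \<Rightarrow> real^3) \<Rightarrow> (real \<Rightarrow> real^3)
   \<Rightarrow> (real \<Rightarrow> real^3) \<Rightarrow> (real \<Rightarrow> real) \<Rightarrow> (real \<Rightarrow> real) \<Rightarrow> (real \<Rightarrow> real) \<Rightarrow> bool"
where
  "darboux_curve I x T g n kg kn tg \<longleftrightarrow>
     open I \<and>
     (\<forall>s\<in>I.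
        (x has_vector_derivative T s) (at s) \<and>
        norm (T s) = 1 \<and> norm (n s) = 1 \<and> T s \<bullet> n s = 0 \<and>
        g s = cross3 (n s) (T s) \<and>
        (T has_vector_derivative (kg s *\<^sub>R g s + kn s *\<^sub>R n s)) (at s) \<and>
        (g has_vector_derivative (- kg s *\<^sub>R T s + tg s *\<^sub>R n s)) (at s) \<and>
        (n has_vector_derivative (- kn s *\<^sub>R T s - tg s *\<^sub>R g s)) (at s))"

text \<open>x (parameter s in I, via s = phi s1) is a Bertrand D-curve with Bertrand
partner D-curve x1 (parameter s1 in I1): at corresponding points g = g1 and
x(s) = x1(s1) + lambda g1(s1), lambda a nonzero constant; s = phi(s1) is a
differentiable function of s1 with derivative dphi = ds/ds1.\<close>

definition bertrand_D_pair ::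
  "real set \<Rightarrow> (real \<Rightarrow> real^3) \<Rightarrow> (real \<Rightarrow> real^3) \<Rightarrow>
   real set \<Rightarrow> (real \<Rightarrow> real^3) \<Rightarrow> (real \<Rightarrow> real^3) \<Rightarrow>
   real \<Rightarrow> (real \<Rightarrow> real) \<Rightarrow> (real \<Rightarrow> real) \<Rightarrow> bool"
where
  "bertrand_D_pair I x g I1 x1 g1 lam phi dphi \<longleftrightarrow>
     lam \<noteq> 0 \<and>
     (\<forall>s1\<in>I1.
        phi s1 \<in> I \<and>
        (phi has_real_derivative dphi s1) (at s1) \<and>
        g (phi s1) = g1 s1 \<and>
        x (phi s1) = x1 s1 + lam *\<^sub>R g1 s1)"

end

theory Submission
  imports Defs
begin

lemma inner1: "norm (v::real^3) = 1 \<Longrightarrow> v \<bullet> v = 1"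
  by (simp add: dot_square_norm)

theorem corollary3:
  fixes x T g n x1 T1 g1 n1 :: "real \<Rightarrow> real^3"
    and kg kn tg kg1 kn1 tg1 phi dphi theta :: "real \<Rightarrow> real"
    and I I1 :: "real set" and lam :: real
  assumes D: "darboux_curve I x T g n kg kn tg"
    and D1: "darboux_curve I1 x1 T1 g1 n1 kg1 kn1 tg1"
    and B: "bertrand_D_pair I x g I1 x1 g1 lam phi dphi"
    and angT: "\<forall>s1\<in>I1. T1 s1 = cos (theta s1) *\<^sub>R T (phi s1) + sin (theta s1) *\<^sub>R n (phi s1)"
    and angN: "\<forall>s1\<in>I1. n1 s1 = - sin (theta s1) *\<^sub>R T (phi s1) + cos (theta s1) *\<^sub>R n (phi s1)"
  shows "((\<forall>s\<in>I. kg s = 0) \<longrightarrow>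
            (\<forall>s1\<in>I1. kg1 s1 = lam * (tg (phi s1))\<^sup>2 *
               (cos (theta s1) - lam * tg (phi s1) * sin (theta s1)) * (dphi s1) ^ 3))
       \<and> ((\<forall>s\<in>I. tg s = 0) \<longrightarrow>
            (\<forall>s1\<in>I1. kg1 s1 = kg (phi s1) * (1 + lam * kg (phi s1))\<^sup>2 *
               cos (theta s1) * (dphi s1) ^ 3))"
proof -
  have key: "kg1 s1 = dphi s1 * (kg (phi s1) * cos (theta s1) - tg (phi s1) * sin (theta s1))
     \<and> cos (theta s1) = dphi s1 * (1 + lam * kg (phi s1))
     \<and> sin (theta s1) = - dphi s1 * lam * tg (phi s1)" if s1: "s1 \<in> I1" for s1
  proof -
    define s where "s = phi s1"
    define a where "a = cos (theta s1)"
    define b where "b = sin (theta s1)"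
    have oI: "open I" and oI1: "open I1" using D D1 by (auto simp: darboux_curve_def)
    have sI: "s \<in> I" and hphi0: "(phi has_real_derivative dphi s1) (at s1)"
      using B s1 by (auto simp: bertrand_D_pair_def s_def)
    have hphi: "(phi has_vector_derivative dphi s1) (at s1)"
      using hphi0 by (simp add: has_real_derivative_iff_has_vector_derivative)
    have Ds: "(x has_vector_derivative T s) (at s)" "norm (T s) = 1" "norm (n s) = 1"
      "T s \<bullet> n s = 0"
      "(g has_vector_derivative (- kg s *\<^sub>R T s + tg s *\<^sub>R n s)) (at s)"
      using D sI by (auto simp: darboux_curve_def)
    have D1s: "(x1 has_vector_derivative T1 s1) (at s1)" "norm (T1 s1) = 1" "norm (n1 s1) = 1"
      "T1 s1 \<bullet> n1 s1 = 0"
      "(g1 has_vector_derivative (- kg1 s1 *\<^sub>R T1 s1 + tg1 s1 *\<^sub>R n1 s1)) (at s1)"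
      using D1 s1 by (auto simp: darboux_curve_def)
    have eqs: "\<And>t. t \<in> I1 \<Longrightarrow> (g \<circ> phi) t = g1 t"
      "\<And>t. t \<in> I1 \<Longrightarrow> (\<lambda>t. (x \<circ> phi) t - lam *\<^sub>R (g \<circ> phi) t) t = x1 t"
      using B by (auto simp: bertrand_D_pair_def)
    have hg: "((g \<circ> phi) has_vector_derivative dphi s1 *\<^sub>R (- kg s *\<^sub>R T s + tg s *\<^sub>R n s)) (at s1)"
      using vector_diff_chain_at[OF hphi] Ds(5) s_def by simp
    have hx: "((x \<circ> phi) has_vector_derivative dphi s1 *\<^sub>R T s) (at s1)"
      using vector_diff_chain_at[OF hphi] Ds(1) s_def by simp
    have hx1: "((\<lambda>t. (x \<circ> phi) t - lam *\<^sub>R (g \<circ> phi) t) has_vector_derivative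
        dphi s1 *\<^sub>R T s - lam *\<^sub>R (dphi s1 *\<^sub>R (- kg s *\<^sub>R T s + tg s *\<^sub>R n s))) (at s1)"
    proof -
      have sc: "((\<lambda>t. lam *\<^sub>R (g \<circ> phi) t) has_vector_derivative
          lam *\<^sub>R (dphi s1 *\<^sub>R (- kg s *\<^sub>R T s + tg s *\<^sub>R n s))) (at s1)"
        by (rule has_vector_derivative_eq_rhs[OF has_vector_derivative_scaleR[OF DERIV_const hg]]) simp
      show ?thesis by (rule has_vector_derivative_diff[OF hx sc])
    qed
    have E1: "- kg1 s1 *\<^sub>R T1 s1 + tg1 s1 *\<^sub>R n1 s1 = dphi s1 *\<^sub>R (- kg s *\<^sub>R T s + tg s *\<^sub>R n s)"
      using vector_derivative_unique_at[OF D1s(5) has_vector_derivative_transform_within_open[OF hg oI1 s1 eqs(1)]] .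
    have E2: "T1 s1 = dphi s1 *\<^sub>R T s - lam *\<^sub>R (dphi s1 *\<^sub>R (- kg s *\<^sub>R T s + tg s *\<^sub>R n s))"
      using vector_derivative_unique_at[OF D1s(1) has_vector_derivative_transform_within_open[OF hx1 oI1 s1 eqs(2)]] .
    have T1e: "T1 s1 = a *\<^sub>R T s + b *\<^sub>R n s" using angT s1 a_def b_def s_def by simp
    have TT: "T s \<bullet> T s = 1" "n s \<bullet> n s = 1" "T1 s1 \<bullet> T1 s1 = 1"
      using Ds D1s inner1 by auto
    have nT: "n s \<bullet> T s = 0" using Ds(4) by (simp add: inner_commute)
    have T1n1: "n1 s1 \<bullet> T1 s1 = 0" using D1s(4) by (simp add: inner_commute)
    have f1: "T1 s1 \<bullet> T s = a" using T1e TT nT Ds(4) by (simp add: inner_add_left)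
    have f2: "T1 s1 \<bullet> T s = dphi s1 * (1 + lam * kg s)"
      using TT nT Ds(4) unfolding E2 by (simp add: inner_add_left inner_diff_left algebra_simps)
    have f3: "T1 s1 \<bullet> n s = b" using T1e TT nT Ds(4) by (simp add: inner_add_left)
    have f4: "T1 s1 \<bullet> n s = - dphi s1 * lam * tg s"
      using TT nT Ds(4) unfolding E2 by (simp add: inner_add_left inner_diff_left algebra_simps)
    have f5: "(- kg1 s1 *\<^sub>R T1 s1 + tg1 s1 *\<^sub>R n1 s1) \<bullet> T1 s1 = - kg1 s1"
      using TT T1n1 by (simp add: inner_add_left inner_diff_left)
    have f6: "(dphi s1 *\<^sub>R (- kg s *\<^sub>R T s + tg s *\<^sub>R n s)) \<bullet> T1 s1
        = dphi s1 * (- kg s * a + tg s * b)"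
      using T1e TT nT Ds(4) by (simp add: inner_add_left inner_add_right algebra_simps)
    have "- kg1 s1 = dphi s1 * (- kg s * a + tg s * b)" using E1 f5 f6 by simp
    then have "kg1 s1 = dphi s1 * (kg s * a - tg s * b)" by (simp add: algebra_simps)
    then show ?thesis using f1 f2 f3 f4 a_def b_def s_def by simp
  qed
  show ?thesis
  proof (intro conjI impI ballI)
    fix s1 assume h: "\<forall>s\<in>I. kg s = 0" and s1: "s1 \<in> I1"
    have "phi s1 \<in> I" using B s1 by (auto simp: bertrand_D_pair_def)
    with h have k0: "kg (phi s1) = 0" by auto
    have pyth: "(cos (theta s1))\<^sup>2 + (sin (theta s1))\<^sup>2 = 1" by simp
    from key[OF s1] k0 pyth show "kg1 s1 = lam * (tg (phi s1))\<^sup>2 *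
               (cos (theta s1) - lam * tg (phi s1) * sin (theta s1)) * (dphi s1) ^ 3"
    proof -
      define d where "d = dphi s1"
      define t where "t = tg (phi s1)"
      have c: "cos (theta s1) = d" and sn: "sin (theta s1) = - lam * d * t"
        and kk: "kg1 s1 = lam * d^2 * t^2"
        using key[OF s1] k0 unfolding d_def t_def by (auto simp: power2_eq_square)
      have pp: "d^2 * (1 + lam^2 * t^2) = 1" using pyth c sn by (simp add: power_mult_distrib algebra_simps)
      have "lam * t\<^sup>2 * (cos (theta s1) - lam * t * sin (theta s1)) * d ^ 3
          = lam * d^2 * t^2 * (d^2 * (1 + lam^2 * t^2))"
        by (simp add: c sn power2_eq_square power3_eq_cube algebra_simps)
      also have "\<dots> = lam * d^2 * t^2" using pp by simp
      finally have "lam * t\<^sup>2 * (cos (theta s1) - lam * t * sin (theta s1)) * d ^ 3 = lam * d^2 * t^2" .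
      then show ?thesis using kk unfolding d_def t_def by (metis (no_types, lifting))
    qed
  next
    fix s1 assume h: "\<forall>s\<in>I. tg s = 0" and s1: "s1 \<in> I1"
    have "phi s1 \<in> I" using B s1 by (auto simp: bertrand_D_pair_def)
    with h have k0: "tg (phi s1) = 0" by auto
    have pyth: "(cos (theta s1))\<^sup>2 + (sin (theta s1))\<^sup>2 = 1" by simp
    from key[OF s1] k0 pyth show "kg1 s1 = kg (phi s1) * (1 + lam * kg (phi s1))\<^sup>2 *
               cos (theta s1) * (dphi s1) ^ 3"
    proof -
      define d where "d = dphi s1"
      define k where "k = kg (phi s1)"
      define c where "c = cos (theta s1)"
      have cc: "c = d * (1 + lam * k)" and kk: "kg1 s1 = d * k * c" and sn: "sin (theta s1) = 0"
        using key[OF s1] k0 unfolding d_def k_def c_def by auto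
      have c2: "c^2 = 1" using pyth sn unfolding c_def by simp
      have "k * (1 + lam * k)\<^sup>2 * c * d ^ 3 = d * k * c * (d * (1 + lam * k))^2"
        by (simp add: power2_eq_square power3_eq_cube algebra_simps)
      also have "\<dots> = d * k * c" using c2 cc by simp
      finally have "k * (1 + lam * k)\<^sup>2 * c * d ^ 3 = d * k * c" .
      then show ?thesis using kk unfolding d_def k_def c_def by (metis (no_types, lifting))
    qed
  qed
qed

end
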